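(* For every $\eta>0$ there exist $\rho=\rho(\eta)>0$ and $n_0$ such that the following holds for all $n\ge n_0$. Let $P,Q\subseteq[n]$ be disjoint subsets, put $p=|P|/n$, $q=|Q|/n$, and suppose $p\ge q$ and $\eta\le p\le1-\eta$. Let $0\le b\le a\le(1-\eta)n$ be integers, and let $A,B\subseteq[n]$ be disjoint sets with $|A|=a$, $|B|=b$, chosen uniformly at random among all such pairs of subsets of $[n]$. Let $Z:=|A\cap P|-|A\cap Q|-|B\cap P|+|B\cap Q|$. Then $\mathbb{P}[Z\ge\rho\sqrt{a}]\ge\rho$. *)

theory Defs
  imports Complex_Main
begin

text \<open>The sample space: ordered pairs of disjoint subsets (A,B) of [n] = {1..n}
  with |A| = a and |B| = b. The uniform probability of an event E is
  card (E \<inter> space) / card space.\<close>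
definition disj_pairs :: "nat \<Rightarrow> nat \<Rightarrow> nat \<Rightarrow> (nat set \<times> nat set) set" where
  "disj_pairs n a b = {(A, B). A \<subseteq> {1..n} \<and> B \<subseteq> {1..n} \<and> A \<inter> B = {}
                                \<and> card A = a \<and> card B = b}"

definition Zstat :: "nat set \<Rightarrow> nat set \<Rightarrow> nat set \<Rightarrow> nat set \<Rightarrow> int" where
  "Zstat P Q A B = int (card (A \<inter> P)) - int (card (A \<inter> Q))
                   - int (card (B \<inter> P)) + int (card (B \<inter> Q))"

end

theory Submission
  imports Defs
begin


definition Ssum :: "'a set \<Rightarrow> ('a \<Rightarrow> real) \<Rightarrow> 'a set \<Rightarrow> real" where
  "Ssum X d T = (\<Sum>x\<in>X. if x \<in> T then - d x else d x)"

lemma Ssum_insert_out: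
  assumes "finite X" "x \<notin> X" "T \<subseteq> X"
  shows "Ssum (insert x X) d T = d x + Ssum X d T"
proof -
  have "x \<notin> T" using assms by auto
  then show ?thesis using assms by (simp add: Ssum_def)
qed

lemma Ssum_insert_in:
  assumes "finite X" "x \<notin> X" "T \<subseteq> X"
  shows "Ssum (insert x X) d (insert x T) = - d x + Ssum X d T"
proof -
  have "(\<Sum>y\<in>X. if y \<in> insert x T then - d y else d y) = (\<Sum>y\<in>X. if y \<in> T then - d y else d y)"
    using assms(2) by (intro sum.cong) auto
  then show ?thesis using assms by (simp add: Ssum_def)
qed

lemma rad_moments:
  fixes d :: "'a \<Rightarrow> real"
  assumes "finite X"
  shows "(\<Sum>T\<in>Pow X. (Ssum X d T)^2) = 2^card X * (\<Sum>x\<in>X. (d x)^2) \<and>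
         (\<Sum>T\<in>Pow X. (Ssum X d T)^4) = 2^card X * (3*(\<Sum>x\<in>X. (d x)^2)^2 - 2*(\<Sum>x\<in>X. (d x)^4))"
  using assms
proof (induction X rule: finite_induct)
  case empty
  then show ?case by (simp add: Ssum_def)
next
  case (insert x X)
  have inj: "inj_on (insert x) (Pow X)"
  proof (rule inj_onI)
    fix A B assume "A \<in> Pow X" "B \<in> Pow X" "insert x A = insert x B"
    then show "A = B" using insert.hyps(2) by (metis Diff_insert_absorb PowD subsetD)
  qed
  have disj: "Pow X \<inter> insert x ` Pow X = {}" using insert.hyps(2) by auto
  have split: "\<And>g::'a set \<Rightarrow> real. (\<Sum>T\<in>Pow (insert x X). g T) = (\<Sum>T\<in>Pow X. g T + g (insert x T))"
  proof -
    fix g :: "'a set \<Rightarrow> real"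
    have "(\<Sum>T\<in>Pow (insert x X). g T) = (\<Sum>T\<in>Pow X. g T) + (\<Sum>T\<in>insert x ` Pow X. g T)"
      unfolding Pow_insert using disj insert.hyps(1) by (intro sum.union_disjoint) auto
    also have "(\<Sum>T\<in>insert x ` Pow X. g T) = (\<Sum>T\<in>Pow X. g (insert x T))"
      using inj by (simp add: sum.reindex)
    finally show "(\<Sum>T\<in>Pow (insert x X). g T) = (\<Sum>T\<in>Pow X. g T + g (insert x T))"
      by (simp add: sum.distrib)
  qed
  let ?S = "Ssum X d"
  have e2: "\<And>T. T \<in> Pow X \<Longrightarrow> (Ssum (insert x X) d T)^2 + (Ssum (insert x X) d (insert x T))^2
      = 2 * (?S T)^2 + 2 * (d x)^2"
    using insert.hyps by (simp add: Ssum_insert_out Ssum_insert_in power2_eq_square algebra_simps)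
  have e4: "\<And>T. T \<in> Pow X \<Longrightarrow> (Ssum (insert x X) d T)^4 + (Ssum (insert x X) d (insert x T))^4
      = 2 * (?S T)^4 + 12 * (d x)^2 * (?S T)^2 + 2 * (d x)^4"
    using insert.hyps by (simp add: Ssum_insert_out Ssum_insert_in) algebra
  have m2: "(\<Sum>T\<in>Pow (insert x X). (Ssum (insert x X) d T)^2) = 2 * (\<Sum>T\<in>Pow X. (?S T)^2) + 2 * (d x)^2 * 2^card X"
    unfolding split using e2 insert.hyps(1) by (simp add: sum.distrib sum_distrib_left card_Pow)
  have m4: "(\<Sum>T\<in>Pow (insert x X). (Ssum (insert x X) d T)^4) = 2 * (\<Sum>T\<in>Pow X. (?S T)^4)
      + 12 * (d x)^2 * (\<Sum>T\<in>Pow X. (?S T)^2) + 2 * (d x)^4 * 2^card X"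
    unfolding split using e4 insert.hyps(1) by (simp add: sum.distrib sum_distrib_left card_Pow)
  from insert.IH have h2: "(\<Sum>T\<in>Pow X. (?S T)^2) = 2^card X * (\<Sum>x\<in>X. (d x)^2)"
    and h4: "(\<Sum>T\<in>Pow X. (?S T)^4) = 2^card X * (3*(\<Sum>x\<in>X. (d x)^2)^2 - 2*(\<Sum>x\<in>X. (d x)^4))"
    by auto
  have s2: "(\<Sum>y\<in>insert x X. (d y)^2) = (d x)^2 + (\<Sum>y\<in>X. (d y)^2)" using insert.hyps by simp
  have s4: "(\<Sum>y\<in>insert x X. (d y)^4) = (d x)^4 + (\<Sum>y\<in>X. (d y)^4)" using insert.hyps by simp
  have c: "card (insert x X) = Suc (card X)" using insert.hyps by simp
  show ?case
    unfolding m2 m4 h2 h4 s2 s4 c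
    by (simp add: power2_eq_square power4_eq_xxxx algebra_simps)
qed

lemma Ssum_compl:
  assumes "finite X" "T \<subseteq> X"
  shows "Ssum X d (X - T) = - Ssum X d T"
  unfolding Ssum_def by (subst sum_negf[symmetric]) (intro sum.cong, auto)

lemma rad_tail:
  fixes d :: "'a \<Rightarrow> real"
  assumes fin: "finite X" and u: "u > 0" and V: "4 * u^2 \<le> (\<Sum>x\<in>X. (d x)^2)"
  shows "2^card X \<le> 12 * card {T \<in> Pow X. Ssum X d T \<ge> u}"
proof -
  define V where "V = (\<Sum>x\<in>X. (d x)^2)"
  define M :: real where "M = 2^card X"
  have Vpos: "V > 0" using u V unfolding V_def by (smt (verit) zero_less_power)
  let ?S = "Ssum X d"
  have pw: "(?S T)^2 \<le> u^2 + (?S T)^4 / (12*V) + (if \<bar>?S T\<bar> \<ge> u then 3*V else 0)" for T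
  proof (cases "\<bar>?S T\<bar> \<ge> u")
    case True
    have "0 \<le> ((?S T)^2 - 6*V)^2 / (12*V)" using Vpos by simp
    also have "((?S T)^2 - 6*V)^2 / (12*V) = (?S T)^4 / (12*V) + 3*V - (?S T)^2"
      using Vpos by (simp add: field_simps power2_eq_square) (simp add: algebra_simps power4_eq_xxxx)
    finally have "(?S T)^2 \<le> (?S T)^4 / (12*V) + 3*V" by simp
    then show ?thesis using True by (smt (verit) zero_le_power2)
  next
    case False
    then have "(?S T)^2 < u^2" using power_strict_mono[of "\<bar>?S T\<bar>" u 2] by simp
    moreover have "0 \<le> (?S T)^4 / (12*V)" using Vpos by simp
    ultimately show ?thesis using False by simp
  qed
  have mom: "(\<Sum>T\<in>Pow X. (?S T)^2) = M * V" "(\<Sum>T\<in>Pow X. (?S T)^4) \<le> 3 * M * V^2"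
    using rad_moments[OF fin, of d] unfolding M_def V_def
    by (auto simp: mult_le_cancel_left sum_nonneg)
  let ?C = "{T \<in> Pow X. \<bar>?S T\<bar> \<ge> u}"
  have "M * V \<le> (\<Sum>T\<in>Pow X. u^2 + (?S T)^4 / (12*V) + (if \<bar>?S T\<bar> \<ge> u then 3*V else 0))"
    unfolding mom(1)[symmetric] by (intro sum_mono pw)
  also have "\<dots> = M * u^2 + (\<Sum>T\<in>Pow X. (?S T)^4) / (12*V) + 3 * V * card ?C"
    using fin by (simp add: sum.distrib sum_divide_distrib[symmetric] sum.If_cases card_Pow M_def Int_def)
  also have "\<dots> \<le> M * V / 4 + 3 * M * V^2 / (12*V) + 3 * V * card ?C"
    using V mom(2) Vpos unfolding V_def[symmetric] M_def
    by (intro add_mono divide_right_mono) auto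
  finally have "M * V \<le> M * V / 4 + 3 * M * V^2 / (12*V) + 3 * V * card ?C" .
  then have c6: "M \<le> 6 * card ?C" using Vpos by (simp add: power2_eq_square field_simps)
  have fP: "finite (Pow X)" using fin by simp
  have "?C = {T \<in> Pow X. ?S T \<ge> u} \<union> {T \<in> Pow X. ?S T \<le> -u}" by auto
  then have "card ?C \<le> card {T \<in> Pow X. ?S T \<ge> u} + card {T \<in> Pow X. ?S T \<le> -u}"
    by (simp add: card_Un_le)
  moreover have "card {T \<in> Pow X. ?S T \<le> -u} = card {T \<in> Pow X. ?S T \<ge> u}"
  proof (rule bij_betw_same_card[of "\<lambda>T. X - T"])
    show "bij_betw (\<lambda>T. X - T) {T \<in> Pow X. ?S T \<le> -u} {T \<in> Pow X. ?S T \<ge> u}"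
    proof (rule bij_betw_byWitness[of _ "\<lambda>T. X - T"])
      show "\<forall>a\<in>{T \<in> Pow X. ?S T \<le> - u}. X - (X - a) = a" by auto
      show "\<forall>a\<in>{T \<in> Pow X. ?S T \<ge> u}. X - (X - a) = a" by auto
      show "(\<lambda>T. X - T) ` {T \<in> Pow X. ?S T \<le> - u} \<subseteq> {T \<in> Pow X. ?S T \<ge> u}"
        using Ssum_compl[OF fin] by fastforce
      show "(\<lambda>T. X - T) ` {T \<in> Pow X. ?S T \<ge> u} \<subseteq> {T \<in> Pow X. ?S T \<le> - u}"
        using Ssum_compl[OF fin] by fastforce
    qed
  qed
  ultimately have "card ?C \<le> 2 * card {T \<in> Pow X. ?S T \<ge> u}" by simp
  moreover have "real (2^card X) \<le> real (6 * card ?C)" using c6 by (simp add: M_def)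
  then have "2^card X \<le> 6 * card ?C" by (simp only: of_nat_le_iff)
  ultimately show ?thesis by linarith
qed



lemma card_filter_sum: "finite A \<Longrightarrow> card {x\<in>A. P x} = (\<Sum>x\<in>A. if P x then 1 else (0::nat))"
proof (induct A rule: finite_induct)
  case empty then show ?case by simp
next
  case (insert a A)
  have "{x \<in> insert a A. P x} = (if P a then insert a {x\<in>A. P x} else {x\<in>A. P x})" by auto
  then show ?case using insert by simp
qed

definition fval :: "nat set \<Rightarrow> nat set \<Rightarrow> nat \<Rightarrow> int" where
  "fval P Q z = (if z \<in> P then 1 else if z \<in> Q then -1 else 0)"

type_synonym cfg = "nat set \<times> nat set \<times> nat set"

definition Wc :: "cfg \<Rightarrow> nat \<Rightarrow> int" where
  "Wc L u = (if u \<in> fst L \<union> fst (snd L) then 1 else if u \<in> snd (snd L) then -1 else 0)"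

definition act :: "(nat \<Rightarrow> nat) \<Rightarrow> cfg \<Rightarrow> cfg" where
  "act \<pi> L = (\<pi> ` fst L, \<pi> ` fst (snd L), \<pi> ` snd (snd L))"

definition tau :: "cfg \<Rightarrow> cfg" where
  "tau L = (snd (snd L), fst (snd L), fst L)"

definition cfgs :: "nat \<Rightarrow> nat \<Rightarrow> nat \<Rightarrow> cfg set" where
  "cfgs n a b = {L. fst L \<subseteq> {1..n} \<and> fst (snd L) \<subseteq> {1..n} \<and> snd (snd L) \<subseteq> {1..n}
     \<and> fst L \<inter> fst (snd L) = {} \<and> fst L \<inter> snd (snd L) = {} \<and> fst (snd L) \<inter> snd (snd L) = {}
     \<and> card (fst L) = b \<and> card (fst (snd L)) = a - b \<and> card (snd (snd L)) = b}"

definition Zc :: "nat set \<Rightarrow> nat set \<Rightarrow> nat \<Rightarrow> cfg \<Rightarrow> int" where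
  "Zc P Q n L = (\<Sum>u\<in>{1..n}. fval P Q u * Wc L u)"

lemma finite_cfgs: "finite (cfgs n a b)"
proof -
  have "cfgs n a b \<subseteq> Pow {1..n} \<times> Pow {1..n} \<times> Pow {1..n}" unfolding cfgs_def by auto
  then show ?thesis by (rule finite_subset) auto
qed

lemma finite_disj_pairs: "finite (disj_pairs n a b)"
proof -
  have "disj_pairs n a b \<subseteq> Pow {1..n} \<times> Pow {1..n}" unfolding disj_pairs_def by auto
  then show ?thesis by (rule finite_subset) auto
qed

lemma Wc_act: "inj \<pi> \<Longrightarrow> Wc (act \<pi> L) (\<pi> u) = Wc L u"
  unfolding Wc_def act_def by (simp add: inj_image_mem_iff)

lemma tau_act: "tau (act \<pi> L) = act \<pi> (tau L)"
  unfolding tau_def act_def by simp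

lemma tau_tau: "tau (tau L) = L"
  unfolding tau_def by simp

lemma act_cfgs:
  assumes "inj \<pi>" "\<pi> ` {1..n} = {1..n}" "L \<in> cfgs n a b"
  shows "act \<pi> L \<in> cfgs n a b"
proof -
  have sub: "\<And>A. A \<subseteq> {1..n} \<Longrightarrow> \<pi> ` A \<subseteq> {1..n}" using assms(2) by blast
  have ci: "\<And>A. card (\<pi> ` A) = card A" using assms(1) by (simp add: card_image inj_on_subset)
  have ii: "\<And>A B. \<pi> ` A \<inter> \<pi> ` B = \<pi> ` (A \<inter> B)" using assms(1) by (simp add: image_Int)
  have "fst L \<subseteq> {1..n}" "fst (snd L) \<subseteq> {1..n}" "snd (snd L) \<subseteq> {1..n}" using assms(3) unfolding cfgs_def by auto
  then have "\<pi> ` fst L \<subseteq> {1..n}" "\<pi> ` fst (snd L) \<subseteq> {1..n}" "\<pi> ` snd (snd L) \<subseteq> {1..n}" using sub by auto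
  then show ?thesis using assms(3) unfolding cfgs_def act_def by (simp add: ci ii)
qed

lemma tau_cfgs: "b \<le> a \<Longrightarrow> L \<in> cfgs n a b \<Longrightarrow> tau L \<in> cfgs n a b"
  unfolding cfgs_def tau_def by auto

lemma act_act: "(\<And>x. \<pi> (\<pi> x) = x) \<Longrightarrow> act \<pi> (act \<pi> L) = L"
  unfolding act_def by (simp add: image_image)

lemma sum_fval:
  assumes "P \<inter> Q = {}" "finite A"
  shows "(\<Sum>u\<in>A. fval P Q u) = int (card (A \<inter> P)) - int (card (A \<inter> Q))"
proof -
  have "(\<Sum>u\<in>A. fval P Q u) = (\<Sum>u\<in>A. of_bool (u \<in> P) - of_bool (u \<in> Q))"
    using assms(1) by (intro sum.cong) (auto simp: fval_def)
  also have "\<dots> = int (card (A \<inter> P)) - int (card (A \<inter> Q))"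
    using assms(2) by (simp add: sum_subtractf Int_def)
  finally show ?thesis .
qed

lemma Zc_Zstat:
  assumes "P \<inter> Q = {}" "L \<in> cfgs n a b"
  shows "Zstat P Q (fst L \<union> fst (snd L)) (snd (snd L)) = Zc P Q n L"
proof -
  obtain A1 A2 B where L: "L = (A1, A2, B)" by (cases L) auto
  have sub: "A1 \<union> A2 \<subseteq> {1..n}" "B \<subseteq> {1..n}" and dj: "(A1 \<union> A2) \<inter> B = {}"
    using assms(2) unfolding L cfgs_def by auto
  have "Zc P Q n L = (\<Sum>u\<in>{1..n}. (if u \<in> A1 \<union> A2 then fval P Q u else 0) - (if u \<in> B then fval P Q u else 0))"
    unfolding Zc_def L using dj by (intro sum.cong) (auto simp: Wc_def)
  also have "\<dots> = (\<Sum>u\<in>A1 \<union> A2. fval P Q u) - (\<Sum>u\<in>B. fval P Q u)"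
  proof -
    have e1: "{Suc 0..n} \<inter> {u. u \<in> A1 \<or> u \<in> A2} = A1 \<union> A2" "B \<inter> {Suc 0..n} = B" "{Suc 0..n} \<inter> B = B" using sub by auto
    show ?thesis by (simp add: sum_subtractf sum.If_cases e1)
  qed
  also have "\<dots> = Zstat P Q (A1 \<union> A2) B"
  proof -
    have fin: "finite (A1 \<union> A2)" "finite B" using sub by (auto intro: finite_subset)
    show ?thesis by (simp add: sum_fval[OF assms(1) fin(1)] sum_fval[OF assms(1) fin(2)] Zstat_def)
  qed
  finally show ?thesis unfolding L by simp
qed

lemma fiber:
  assumes "(A, B) \<in> disj_pairs n a b" "b \<le> a"
  shows "card {L \<in> cfgs n a b. (fst L \<union> fst (snd L), snd (snd L)) = (A, B)} = a choose b"
proof -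
  have fA: "finite A" and cA: "card A = a" and AU: "A \<subseteq> {1..n}"
    using assms(1) unfolding disj_pairs_def by (auto intro: finite_subset)
  have eq: "{L \<in> cfgs n a b. (fst L \<union> fst (snd L), snd (snd L)) = (A, B)}
        = (\<lambda>A1. (A1, A - A1, B)) ` {A1. A1 \<subseteq> A \<and> card A1 = b}"
  proof
    show "{L \<in> cfgs n a b. (fst L \<union> fst (snd L), snd (snd L)) = (A, B)} \<subseteq> (\<lambda>A1. (A1, A - A1, B)) ` {A1. A1 \<subseteq> A \<and> card A1 = b}"
    proof
      fix L assume "L \<in> {L \<in> cfgs n a b. (fst L \<union> fst (snd L), snd (snd L)) = (A, B)}"
      then obtain A1 A2 where L: "L = (A1, A2, B)" "A1 \<union> A2 = A" "A1 \<inter> A2 = {}" "card A1 = b"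
        unfolding cfgs_def by (cases L) auto
      then have "A2 = A - A1" by auto
      then show "L \<in> (\<lambda>A1. (A1, A - A1, B)) ` {A1. A1 \<subseteq> A \<and> card A1 = b}" using L by auto
    qed
    show "(\<lambda>A1. (A1, A - A1, B)) ` {A1. A1 \<subseteq> A \<and> card A1 = b} \<subseteq> {L \<in> cfgs n a b. (fst L \<union> fst (snd L), snd (snd L)) = (A, B)}"
    proof
      fix L assume "L \<in> (\<lambda>A1. (A1, A - A1, B)) ` {A1. A1 \<subseteq> A \<and> card A1 = b}"
      then obtain A1 where L: "L = (A1, A - A1, B)" "A1 \<subseteq> A" "card A1 = b" by auto
      have "card (A - A1) = a - b" using L fA cA by (simp add: card_Diff_subset finite_subset)
      then show "L \<in> {L \<in> cfgs n a b. (fst L \<union> fst (snd L), snd (snd L)) = (A, B)}"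
        using L assms(1) unfolding cfgs_def disj_pairs_def by auto
    qed
  qed
  have "inj_on (\<lambda>A1. (A1, A - A1, B)) {A1. A1 \<subseteq> A \<and> card A1 = b}" by (auto intro: inj_onI)
  then show ?thesis unfolding eq using n_subsets[OF fA, of b] cA by (simp add: card_image)
qed

lemma fiber_count:
  assumes "b \<le> a"
  shows "card {L \<in> cfgs n a b. \<Phi> (fst L \<union> fst (snd L), snd (snd L))} = (a choose b) * card {p \<in> disj_pairs n a b. \<Phi> p}"
proof -
  let ?g = "\<lambda>L. (fst L \<union> fst (snd L), snd (snd L))"
  let ?F = "\<lambda>p. {L \<in> cfgs n a b. ?g L = p}"
  have gin: "L \<in> cfgs n a b \<Longrightarrow> ?g L \<in> disj_pairs n a b" for L
  proof -
    assume "L \<in> cfgs n a b"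
    then obtain A1 A2 B where L: "L = (A1, A2, B)" and h: "A1 \<subseteq> {1..n}" "A2 \<subseteq> {1..n}" "B \<subseteq> {1..n}"
      "A1 \<inter> A2 = {}" "A1 \<inter> B = {}" "A2 \<inter> B = {}" "card A1 = b" "card A2 = a - b" "card B = b"
      unfolding cfgs_def by (cases L) auto
    have "card (A1 \<union> A2) = a" using h assms by (simp add: card_Un_disjoint finite_subset)
    then show ?thesis using h unfolding L disj_pairs_def by auto
  qed
  have eq: "{L \<in> cfgs n a b. \<Phi> (?g L)} = (\<Union>p\<in>{p \<in> disj_pairs n a b. \<Phi> p}. ?F p)"
    using gin by auto
  have "card (\<Union>p\<in>{p \<in> disj_pairs n a b. \<Phi> p}. ?F p) = (\<Sum>p\<in>{p \<in> disj_pairs n a b. \<Phi> p}. card (?F p))"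
    by (rule card_UN_disjoint) (auto simp: finite_disj_pairs finite_cfgs)
  also have "\<dots> = (\<Sum>p\<in>{p \<in> disj_pairs n a b. \<Phi> p}. a choose b)"
    by (intro sum.cong refl) (auto intro!: fiber assms)
  finally show ?thesis unfolding eq by simp
qed



definition sw :: "nat \<Rightarrow> nat \<Rightarrow> nat \<Rightarrow> nat" where
  "sw p q z = (if z = p then q else if z = q then p else z)"

lemma sw_sw: "sw p q (sw p q z) = z" unfolding sw_def by auto

lemma inj_sw: "inj (sw p q)" by (metis injI sw_sw)

lemma sw_image: "p \<in> U \<Longrightarrow> q \<in> U \<Longrightarrow> sw p q ` U = U"
  unfolding sw_def by (auto simp: image_iff)

definition good :: "cfg \<Rightarrow> nat \<Rightarrow> nat \<Rightarrow> bool" where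
  "good L x y = (Wc L x \<noteq> Wc L y \<and> Wc (tau L) x \<noteq> Wc (tau L) y)"

lemma good_act: "inj \<pi> \<Longrightarrow> good (act \<pi> L) (\<pi> x) (\<pi> y) = good L x y"
  unfolding good_def by (simp add: Wc_act tau_act)

lemma cnt_le:
  assumes U: "x \<in> {1..n}" "y \<in> {1..n}" "x' \<in> {1..n}" "y' \<in> {1..n}" and d: "x \<noteq> y" "x' \<noteq> y'"
  shows "card {L \<in> cfgs n a b. good L x y} \<le> card {L \<in> cfgs n a b. good L x' y'}"
proof -
  define s1 where "s1 = sw x x'"
  define s2 where "s2 = sw (s1 y) y'"
  define \<pi> where "\<pi> = s2 \<circ> s1"
  have s1y: "s1 y \<noteq> x'" unfolding s1_def sw_def using d by auto
  have px: "\<pi> x = x'" unfolding \<pi>_def s2_def using s1y d by (simp add: s1_def sw_def)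
  have py: "\<pi> y = y'" unfolding \<pi>_def s2_def by (simp add: sw_def)
  have inj: "inj \<pi>" unfolding \<pi>_def s1_def s2_def by (intro inj_compose inj_sw)
  have s1U: "s1 y \<in> {1..n}" unfolding s1_def sw_def using U by auto
  have "\<pi> ` {1..n} = s2 ` (s1 ` {1..n})" unfolding \<pi>_def by (simp add: image_comp)
  also have "\<dots> = {1..n}" unfolding s2_def s1_def
    using sw_image[OF U(1) U(3)] sw_image[OF s1U[unfolded s1_def] U(4)] by simp
  finally have im: "\<pi> ` {1..n} = {1..n}" .
  have "inj_on (act \<pi>) {L \<in> cfgs n a b. good L x y}"
  proof (rule inj_onI)
    fix L M assume "act \<pi> L = act \<pi> M"
    then show "L = M" using inj unfolding act_def
      by (cases L, cases M) (simp add: inj_image_eq_iff)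
  qed
  moreover have "act \<pi> ` {L \<in> cfgs n a b. good L x y} \<subseteq> {L \<in> cfgs n a b. good L x' y'}"
    using act_cfgs[OF inj im] good_act[OF inj] px py by force
  ultimately show ?thesis by (intro card_inj_on_le) (auto intro: finite_subset[OF _ finite_cfgs])
qed

lemma cnt_eq:
  assumes "x \<in> {1..n}" "y \<in> {1..n}" "x' \<in> {1..n}" "y' \<in> {1..n}" "x \<noteq> y" "x' \<noteq> y'"
  shows "card {L \<in> cfgs n a b. good L x y} = card {L \<in> cfgs n a b. good L x' y'}"
  using cnt_le[of x n y x' y' a b] cnt_le[of x' n y' x y a b] assms by simp

lemma Wc_tau_sum:
  assumes "fst L \<inter> fst (snd L) = {}" "fst L \<inter> snd (snd L) = {}" "fst (snd L) \<inter> snd (snd L) = {}"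
  shows "Wc L v + Wc (tau L) v = (if v \<in> fst (snd L) then 2 else 0)"
  using assms unfolding Wc_def tau_def by auto

lemma good_pairs_card:
  assumes L: "L \<in> cfgs n a b" and ba: "b \<le> a"
  shows "2*b*b + (a+b)*(n-(a+b)) \<le> card {p \<in> {1..n} \<times> {1..n}. fst p \<noteq> snd p \<and> good L (fst p) (snd p)}"
proof -
  obtain A1 A2 B where LL: "L = (A1, A2, B)" by (cases L) auto
  have h: "A1 \<subseteq> {1..n}" "A2 \<subseteq> {1..n}" "B \<subseteq> {1..n}"
      "A1 \<inter> A2 = {}" "A1 \<inter> B = {}" "A2 \<inter> B = {}" "card A1 = b" "card A2 = a - b" "card B = b"
    using L unfolding LL cfgs_def by auto
  let ?D = "A1 \<union> A2 \<union> B"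
  let ?K = "{1..n} - ?D"
  have fin: "finite A1" "finite A2" "finite B" using h by (auto intro: finite_subset)
  have cD: "card ?D = a + b" using h fin ba by (simp add: card_Un_disjoint Int_Un_distrib2)
  have cK: "card ?K = n - (a+b)" using h cD by (simp add: card_Diff_subset fin)
  let ?S = "A1 \<times> B \<union> B \<times> A1 \<union> ?D \<times> ?K"
  have sub: "?S \<subseteq> {p \<in> {1..n} \<times> {1..n}. fst p \<noteq> snd p \<and> good L (fst p) (snd p)}"
    using h unfolding LL good_def Wc_def tau_def by auto
  have "card ?S = b*b + b*b + (a+b)*(n-(a+b))"
  proof -
    have d1: "A1 \<times> B \<inter> B \<times> A1 = {}" using h by auto
    have d2: "(A1 \<times> B \<union> B \<times> A1) \<inter> ?D \<times> ?K = {}" by auto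
    have "card ?S = card (A1 \<times> B \<union> B \<times> A1) + card (?D \<times> ?K)"
      using d2 fin by (intro card_Un_disjoint) auto
    also have "card (A1 \<times> B \<union> B \<times> A1) = card (A1 \<times> B) + card (B \<times> A1)"
      using d1 fin by (intro card_Un_disjoint) auto
    finally show ?thesis using h cD cK by (simp add: card_cartesian_product)
  qed
  moreover have "card ?S \<le> card {p \<in> {1..n} \<times> {1..n}. fst p \<noteq> snd p \<and> good L (fst p) (snd p)}"
    by (rule card_mono[OF _ sub]) auto
  ultimately show ?thesis by simp
qed



locale pairing =
  fixes n :: nat and P Q X :: "nat set" and \<beta> :: "nat \<Rightarrow> nat"
  assumes PU: "P \<subseteq> {1..n}" and QU: "Q \<subseteq> {1..n}" and PQ: "P \<inter> Q = {}"
    and XP: "X \<subseteq> P" and \<beta>X: "\<beta> ` X \<subseteq> {1..n} - P" and inj\<beta>: "inj_on \<beta> X" and QY: "Q \<subseteq> \<beta> ` X"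
begin

definition psi :: "nat set \<Rightarrow> nat \<Rightarrow> nat" where
  "psi T v = (if v \<in> T then \<beta> v else if v \<in> \<beta> ` T then the_inv_into X \<beta> v else v)"

definition Cc :: "cfg \<Rightarrow> int" where
  "Cc L = (\<Sum>x\<in>X. (fval P Q x + fval P Q (\<beta> x)) * (Wc L x + Wc L (\<beta> x)))
          + 2 * (\<Sum>v\<in>{1..n} - X - \<beta> ` X. fval P Q v * Wc L v)"

definition dd :: "cfg \<Rightarrow> nat \<Rightarrow> int" where
  "dd L x = (fval P Q x - fval P Q (\<beta> x)) * (Wc L x - Wc L (\<beta> x))"

definition Np :: "cfg \<Rightarrow> nat" where
  "Np L = card {x \<in> X. good L x (\<beta> x)}"

lemma XU: "X \<subseteq> {1..n}" using XP PU by auto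
lemma finX: "finite X" using XU by (rule finite_subset) auto
lemma XY: "x \<in> X \<Longrightarrow> \<beta> x \<notin> X" using XP \<beta>X by auto
lemma YU: "x \<in> X \<Longrightarrow> \<beta> x \<in> {1..n}" using \<beta>X by auto

lemma psi_X: "T \<subseteq> X \<Longrightarrow> x \<in> X \<Longrightarrow> psi T x = (if x \<in> T then \<beta> x else x)"
  unfolding psi_def using XY by auto

lemma psi_Y: "T \<subseteq> X \<Longrightarrow> x \<in> X \<Longrightarrow> psi T (\<beta> x) = (if x \<in> T then x else \<beta> x)"
proof -
  assume T: "T \<subseteq> X" and x: "x \<in> X"
  have "\<beta> x \<notin> T" using XY x T by auto
  moreover have "\<beta> x \<in> \<beta> ` T \<longleftrightarrow> x \<in> T" using inj\<beta> T x by (simp add: inj_on_image_mem_iff)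
  moreover have "the_inv_into X \<beta> (\<beta> x) = x" using inj\<beta> x by (simp add: the_inv_into_f_f)
  ultimately show ?thesis unfolding psi_def by auto
qed

lemma psi_other: "T \<subseteq> X \<Longrightarrow> v \<notin> X \<Longrightarrow> v \<notin> \<beta> ` X \<Longrightarrow> psi T v = v"
  unfolding psi_def by auto

lemma psi_psi: "T \<subseteq> X \<Longrightarrow> psi T (psi T v) = v"
proof -
  assume T: "T \<subseteq> X"
  show ?thesis
  proof (cases "v \<in> X")
    case True then show ?thesis using T by (simp add: psi_X psi_Y)
  next
    case False
    show ?thesis
    proof (cases "v \<in> \<beta> ` X")
      case True
      then obtain x where "x \<in> X" "v = \<beta> x" by auto
      then show ?thesis using T by (simp add: psi_X psi_Y)
    next
      case False2: False
      then show ?thesis using T False by (simp add: psi_other)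
    qed
  qed
qed

lemma inj_psi: "T \<subseteq> X \<Longrightarrow> inj (psi T)"
  by (metis injI psi_psi)

lemma psi_U: "T \<subseteq> X \<Longrightarrow> psi T ` {1..n} = {1..n}"
proof -
  assume T: "T \<subseteq> X"
  have sub: "psi T v \<in> {1..n}" if "v \<in> {1..n}" for v
  proof (cases "v \<in> X")
    case True then show ?thesis using T that YU by (simp add: psi_X)
  next
    case False
    show ?thesis
    proof (cases "v \<in> \<beta> ` X")
      case True
      then obtain x where "x \<in> X" "v = \<beta> x" by auto
      then show ?thesis using T XU that by (auto simp: psi_Y)
    next
      case False2: False
      then show ?thesis using T False that by (simp add: psi_other)
    qed
  qed
  show ?thesis
  proof
    show "psi T ` {1..n} \<subseteq> {1..n}" using sub by auto
    show "{1..n} \<subseteq> psi T ` {1..n}"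
    proof
      fix v assume "v \<in> {1..n}"
      then have "psi T v \<in> {1..n}" by (rule sub)
      moreover have "v = psi T (psi T v)" using psi_psi[OF T] by simp
      ultimately show "v \<in> psi T ` {1..n}" by blast
    qed
  qed
qed

lemma Wc_act_psi: "T \<subseteq> X \<Longrightarrow> Wc (act (psi T) L) u = Wc L (psi T u)"
  using Wc_act[OF inj_psi, of T L "psi T u"] psi_psi[of T u] by simp

lemma sum_split:
  fixes g :: "nat \<Rightarrow> int"
  shows "(\<Sum>v\<in>{1..n}. g v) = (\<Sum>x\<in>X. g x + g (\<beta> x)) + (\<Sum>v\<in>{1..n} - X - \<beta> ` X. g v)"
proof -
  have YU': "\<beta> ` X \<subseteq> {1..n}" using \<beta>X by auto
  have eq: "{1..n} = X \<union> (\<beta> ` X \<union> ({1..n} - X - \<beta> ` X))" using XU YU' by auto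
  have fY: "finite (\<beta> ` X)" using finX by simp
  have "(\<Sum>v\<in>{1..n}. g v) = (\<Sum>v\<in>X. g v) + (\<Sum>v\<in>\<beta> ` X \<union> ({1..n} - X - \<beta> ` X). g v)"
    by (subst eq, rule sum.union_disjoint) (use finX fY XY in auto)
  also have "(\<Sum>v\<in>\<beta> ` X \<union> ({1..n} - X - \<beta> ` X). g v) = (\<Sum>v\<in>\<beta> ` X. g v) + (\<Sum>v\<in>{1..n} - X - \<beta> ` X. g v)"
    by (rule sum.union_disjoint) (use fY in auto)
  also have "(\<Sum>v\<in>\<beta> ` X. g v) = (\<Sum>x\<in>X. g (\<beta> x))" using inj\<beta> by (simp add: sum.reindex)
  finally show ?thesis by (simp add: sum.distrib)
qed

lemma decomp:
  assumes T: "T \<subseteq> X"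
  shows "2 * Zc P Q n (act (psi T) L) = Cc L + (\<Sum>x\<in>X. if x \<in> T then - dd L x else dd L x)"
proof -
  let ?f = "fval P Q"
  let ?W = "Wc L"
  have "Zc P Q n (act (psi T) L) = (\<Sum>u\<in>{1..n}. ?f u * ?W (psi T u))"
    unfolding Zc_def using T by (simp add: Wc_act_psi)
  also have "\<dots> = (\<Sum>u\<in>psi T ` {1..n}. ?f u * ?W (psi T u))" using psi_U[OF T] by simp
  also have "\<dots> = (\<Sum>v\<in>{1..n}. ?f (psi T v) * ?W v)"
    using inj_psi[OF T] psi_psi[OF T] by (simp add: sum.reindex inj_on_subset)
  also have "\<dots> = (\<Sum>x\<in>X. ?f (psi T x) * ?W x + ?f (psi T (\<beta> x)) * ?W (\<beta> x))
                  + (\<Sum>v\<in>{1..n} - X - \<beta> ` X. ?f (psi T v) * ?W v)"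
    by (rule sum_split)
  also have "(\<Sum>v\<in>{1..n} - X - \<beta> ` X. ?f (psi T v) * ?W v) = (\<Sum>v\<in>{1..n} - X - \<beta> ` X. ?f v * ?W v)"
    using T by (intro sum.cong) (auto simp: psi_other)
  finally have Z: "Zc P Q n (act (psi T) L) = (\<Sum>x\<in>X. ?f (psi T x) * ?W x + ?f (psi T (\<beta> x)) * ?W (\<beta> x))
                  + (\<Sum>v\<in>{1..n} - X - \<beta> ` X. ?f v * ?W v)" .
  have pt: "2 * (?f (psi T x) * ?W x + ?f (psi T (\<beta> x)) * ?W (\<beta> x))
     = (?f x + ?f (\<beta> x)) * (?W x + ?W (\<beta> x)) + (if x \<in> T then - dd L x else dd L x)" if "x \<in> X" for x
    using that T by (simp add: psi_X psi_Y dd_def algebra_simps)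
  have "2 * Zc P Q n (act (psi T) L) = (\<Sum>x\<in>X. 2 * (?f (psi T x) * ?W x + ?f (psi T (\<beta> x)) * ?W (\<beta> x)))
                  + 2 * (\<Sum>v\<in>{1..n} - X - \<beta> ` X. ?f v * ?W v)"
    unfolding Z by (simp add: sum_distrib_left algebra_simps)
  also have "\<dots> = (\<Sum>x\<in>X. (?f x + ?f (\<beta> x)) * (?W x + ?W (\<beta> x)) + (if x \<in> T then - dd L x else dd L x))
                  + 2 * (\<Sum>v\<in>{1..n} - X - \<beta> ` X. ?f v * ?W v)"
    using pt by simp
  finally show ?thesis unfolding Cc_def by (simp add: sum.distrib)
qed

lemma Cc_tau:
  assumes L: "L \<in> cfgs n a b"
  shows "0 \<le> Cc L + Cc (tau L)"
proof -
  let ?f = "fval P Q"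
  have dj: "fst L \<inter> fst (snd L) = {}" "fst L \<inter> snd (snd L) = {}" "fst (snd L) \<inter> snd (snd L) = {}"
    using L unfolding cfgs_def by auto
  note ws = Wc_tau_sum[OF dj]
  have f1: "0 \<le> ?f x + ?f (\<beta> x)" if "x \<in> X" for x
    using that XP \<beta>X by (auto simp: fval_def)
  have f2: "0 \<le> ?f v" if "v \<in> {1..n} - X - \<beta> ` X" for v
    using that QY by (auto simp: fval_def)
  have "Cc L + Cc (tau L) = (\<Sum>x\<in>X. (?f x + ?f (\<beta> x)) * ((Wc L x + Wc (tau L) x) + (Wc L (\<beta> x) + Wc (tau L) (\<beta> x))))
      + 2 * (\<Sum>v\<in>{1..n} - X - \<beta> ` X. ?f v * (Wc L v + Wc (tau L) v))"
    unfolding Cc_def by (simp add: sum.distrib algebra_simps)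
  also have "\<dots> \<ge> 0"
  proof -
    have "0 \<le> (\<Sum>x\<in>X. (?f x + ?f (\<beta> x)) * ((Wc L x + Wc (tau L) x) + (Wc L (\<beta> x) + Wc (tau L) (\<beta> x))))"
      by (intro sum_nonneg mult_nonneg_nonneg) (auto simp: ws f1)
    moreover have "0 \<le> (\<Sum>v\<in>{1..n} - X - \<beta> ` X. ?f v * (Wc L v + Wc (tau L) v))"
      by (intro sum_nonneg mult_nonneg_nonneg) (auto simp: ws f2)
    ultimately show ?thesis by simp
  qed
  finally show ?thesis .
qed

lemma dd_good: "x \<in> X \<Longrightarrow> good L x (\<beta> x) \<Longrightarrow> 1 \<le> (dd L x)^2"
proof -
  assume x: "x \<in> X" and g: "good L x (\<beta> x)"
  have "fval P Q x - fval P Q (\<beta> x) \<noteq> 0" using x XP \<beta>X by (auto simp: fval_def)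
  moreover have "Wc L x - Wc L (\<beta> x) \<noteq> 0" using g unfolding good_def by simp
  ultimately have "dd L x \<noteq> 0" unfolding dd_def by simp
  then have "1 \<le> \<bar>dd L x\<bar>" by simp
  then have "1 * 1 \<le> \<bar>dd L x\<bar> * \<bar>dd L x\<bar>" by (intro mult_mono) auto
  then show ?thesis by (simp add: power2_eq_square)
qed

lemma Np_le_V: "int (Np L) \<le> (\<Sum>x\<in>X. (dd L x)^2)"
proof -
  have "int (Np L) = (\<Sum>x\<in>X. if good L x (\<beta> x) then 1 else 0)"
    unfolding Np_def using finX by (simp add: card_filter_sum of_nat_sum) (rule sum.cong; simp)
  also have "\<dots> \<le> (\<Sum>x\<in>X. (dd L x)^2)"
    by (intro sum_mono) (auto simp: dd_good)
  finally show ?thesis .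
qed

lemma Np_le:
  assumes L: "L \<in> cfgs n a b"
  shows "Np L \<le> 2 * (b + (a - b) + b)"
proof -
  let ?D = "fst L \<union> fst (snd L) \<union> snd (snd L)"
  have fD: "finite ?D" using L unfolding cfgs_def by (auto intro: finite_subset)
  have "card ?D \<le> card (fst L \<union> fst (snd L)) + card (snd (snd L))" by (rule card_Un_le)
  moreover have "card (fst L \<union> fst (snd L)) \<le> card (fst L) + card (fst (snd L))" by (rule card_Un_le)
  ultimately have cD: "card ?D \<le> b + (a - b) + b" using L unfolding cfgs_def by simp
  have W0: "u \<notin> ?D \<Longrightarrow> Wc L u = 0" for u unfolding Wc_def by auto
  have sub: "{x \<in> X. good L x (\<beta> x)} \<subseteq> {x \<in> X. x \<in> ?D} \<union> {x \<in> X. \<beta> x \<in> ?D}"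
    using W0 unfolding good_def by fastforce
  have c1: "card {x \<in> X. x \<in> ?D} \<le> card ?D" using fD by (intro card_mono) auto
  have "card {x \<in> X. \<beta> x \<in> ?D} \<le> card ?D"
    using fD inj\<beta> by (intro card_inj_on_le[of \<beta>]) (auto intro: inj_on_subset)
  then have "card {x \<in> X. good L x (\<beta> x)} \<le> 2 * card ?D"
    using c1 card_mono[OF _ sub] card_Un_le[of "{x \<in> X. x \<in> ?D}" "{x \<in> X. \<beta> x \<in> ?D}"] finX by simp
  then show ?thesis unfolding Np_def using cD by simp
qed

end



lemma sum_card_swap:
  assumes "finite A" "finite B"
  shows "(\<Sum>x\<in>A. card {y\<in>B. R x y}) = (\<Sum>y\<in>B. card {x\<in>A. R x y})"
  using assms by (simp add: card_filter_sum sum.swap[of _ A B])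

context pairing
begin

lemma Np_tau: "Np (tau L) = Np L"
  unfolding Np_def good_def tau_tau by metis

lemma act_psi_card:
  assumes T: "T \<subseteq> X"
  shows "card {L \<in> cfgs n a b. \<Phi> (act (psi T) L)} = card {L \<in> cfgs n a b. \<Phi> L}"
proof (rule bij_betw_same_card[of "act (psi T)"])
  have ac: "L \<in> cfgs n a b \<Longrightarrow> act (psi T) L \<in> cfgs n a b" for L
    using act_cfgs[OF inj_psi[OF T] psi_U[OF T]] by blast
  have aa: "act (psi T) (act (psi T) L) = L" for L using act_act psi_psi[OF T] by blast
  show "bij_betw (act (psi T)) {L \<in> cfgs n a b. \<Phi> (act (psi T) L)} {L \<in> cfgs n a b. \<Phi> L}"
    by (rule bij_betw_byWitness[of _ "act (psi T)"]) (auto simp: aa ac intro!: image_eqI[of _ "act (psi T)"])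
qed

lemma averaging:
  "2 ^ card X * card {L \<in> cfgs n a b. \<Phi> L} = (\<Sum>L\<in>cfgs n a b. card {T \<in> Pow X. \<Phi> (act (psi T) L)})"
proof -
  have "(\<Sum>L\<in>cfgs n a b. card {T \<in> Pow X. \<Phi> (act (psi T) L)}) = (\<Sum>T\<in>Pow X. card {L \<in> cfgs n a b. \<Phi> (act (psi T) L)})"
    using finX finite_cfgs by (intro sum_card_swap) auto
  also have "\<dots> = (\<Sum>T\<in>Pow X. card {L \<in> cfgs n a b. \<Phi> L})"
    by (intro sum.cong refl act_psi_card) auto
  finally show ?thesis using finX by (simp add: card_Pow)
qed

lemma good_count:
  assumes L: "L \<in> cfgs n a b" and C: "0 \<le> Cc L" and u: "u > 0"
    and V: "4 * u^2 \<le> real (Np L)"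
  shows "2 ^ card X \<le> 12 * card {T \<in> Pow X. 2 * real_of_int (Zc P Q n (act (psi T) L)) \<ge> u}"
proof -
  define d where "d x = real_of_int (dd L x)" for x
  have "real (Np L) \<le> (\<Sum>x\<in>X. (d x)^2)"
    using Np_le_V[of L] unfolding d_def by (simp flip: of_int_power of_int_sum)
  then have "2 ^ card X \<le> 12 * card {T \<in> Pow X. Ssum X d T \<ge> u}"
    using rad_tail[OF finX u] V by simp
  also have "card {T \<in> Pow X. Ssum X d T \<ge> u} \<le> card {T \<in> Pow X. 2 * real_of_int (Zc P Q n (act (psi T) L)) \<ge> u}"
  proof (rule card_mono)
    show "finite {T \<in> Pow X. 2 * real_of_int (Zc P Q n (act (psi T) L)) \<ge> u}" using finX by simp
    show "{T \<in> Pow X. Ssum X d T \<ge> u} \<subseteq> {T \<in> Pow X. 2 * real_of_int (Zc P Q n (act (psi T) L)) \<ge> u}"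
    proof safe
      fix T assume T: "T \<subseteq> X" and s: "u \<le> Ssum X d T"
      have "Ssum X d T = real_of_int (\<Sum>x\<in>X. if x \<in> T then - dd L x else dd L x)"
        unfolding Ssum_def d_def of_int_sum by (intro sum.cong) auto
      also have "\<dots> \<le> real_of_int (2 * Zc P Q n (act (psi T) L))"
        unfolding decomp[OF T] using C by simp
      finally show "u \<le> 2 * real_of_int (Zc P Q n (act (psi T) L))" using s by simp
    qed
  qed
  finally show ?thesis by simp
qed

lemma E_half:
  assumes ba: "b \<le> a"
  shows "card {L \<in> cfgs n a b. k \<le> real (Np L)} \<le> 2 * card {L \<in> cfgs n a b. k \<le> real (Np L) \<and> 0 \<le> Cc L}"
proof -
  let ?E = "{L \<in> cfgs n a b. k \<le> real (Np L)}"
  let ?Ep = "{L \<in> cfgs n a b. k \<le> real (Np L) \<and> 0 \<le> Cc L}"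
  have fin: "finite ?Ep" by (rule finite_subset[OF _ finite_cfgs]) auto
  have "?E \<subseteq> ?Ep \<union> tau ` ?Ep"
  proof
    fix L assume L: "L \<in> ?E"
    show "L \<in> ?Ep \<union> tau ` ?Ep"
    proof (cases "0 \<le> Cc L")
      case True then show ?thesis using L by auto
    next
      case False
      then have "0 \<le> Cc (tau L)" using Cc_tau[of L a b] L by simp
      then have "tau L \<in> ?Ep" using L tau_cfgs[OF ba] Np_tau by auto
      then have "L \<in> tau ` ?Ep" by (intro image_eqI[of L tau "tau L"]) (simp_all add: tau_tau)
      then show ?thesis by blast
    qed
  qed
  then have "card ?E \<le> card (?Ep \<union> tau ` ?Ep)" using fin by (intro card_mono) auto
  also have "\<dots> \<le> card ?Ep + card (tau ` ?Ep)" by (rule card_Un_le)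
  also have "card (tau ` ?Ep) \<le> card ?Ep" by (rule card_image_le[OF fin])
  finally show ?thesis by simp
qed

lemma sum_Np:
  assumes ba: "b \<le> a" and Xne: "X \<noteq> {}"
  shows "real (card X) * real (card (cfgs n a b)) * real (2*b*b + (a+b)*(n-(a+b)))
      \<le> real (n^2) * (\<Sum>L\<in>cfgs n a b. real (Np L))"
proof -
  let ?cnt = "\<lambda>x y. card {L \<in> cfgs n a b. good L x y}"
  obtain x0 where x0: "x0 \<in> X" using Xne by auto
  define c0 where "c0 = ?cnt x0 (\<beta> x0)"
  have x0U: "x0 \<in> {1..n}" "\<beta> x0 \<in> {1..n}" "x0 \<noteq> \<beta> x0" using x0 XU YU[OF x0] XY[OF x0] by auto
  let ?D = "{p \<in> {1..n} \<times> {1..n}. fst p \<noteq> snd p}"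
  have cD: "\<And>p. p \<in> ?D \<Longrightarrow> ?cnt (fst p) (snd p) = c0"
    unfolding c0_def using x0U by (intro cnt_eq) auto
  have cX: "\<And>x. x \<in> X \<Longrightarrow> ?cnt x (\<beta> x) = c0"
  proof -
    fix x assume x: "x \<in> X"
    have "x \<noteq> \<beta> x" using XY[OF x] x by auto
    then show "?cnt x (\<beta> x) = c0" unfolding c0_def using x0U x XU YU[OF x] by (intro cnt_eq) auto
  qed
  have "(\<Sum>L\<in>cfgs n a b. Np L) = (\<Sum>x\<in>X. ?cnt x (\<beta> x))"
    unfolding Np_def using finX finite_cfgs by (intro sum_card_swap)
  also have "\<dots> = card X * c0" using cX by simp
  finally have sNp: "(\<Sum>L\<in>cfgs n a b. Np L) = card X * c0" .
  have fD: "finite ?D" by (rule finite_subset[of _ "{1..n} \<times> {1..n}"]) auto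
  have "card (cfgs n a b) * (2*b*b + (a+b)*(n-(a+b))) = (\<Sum>L\<in>cfgs n a b. 2*b*b + (a+b)*(n-(a+b)))"
    by simp
  also have "\<dots> \<le> (\<Sum>L\<in>cfgs n a b. card {p \<in> ?D. good L (fst p) (snd p)})"
  proof (rule sum_mono)
    fix L assume "L \<in> cfgs n a b"
    from good_pairs_card[OF this ba]
    show "2*b*b + (a+b)*(n-(a+b)) \<le> card {p \<in> ?D. good L (fst p) (snd p)}"
      by (simp add: conj_assoc)
  qed
  also have "\<dots> = (\<Sum>p\<in>?D. ?cnt (fst p) (snd p))"
    using fD finite_cfgs by (intro sum_card_swap)
  also have "\<dots> = card ?D * c0" using cD by simp
  also have "\<dots> \<le> n^2 * c0"
  proof -
    have "card ?D \<le> card ({1..n} \<times> {1..n})" by (rule card_mono) auto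
    then have "card ?D \<le> n^2" by (simp add: card_cartesian_product power2_eq_square)
    then show ?thesis by simp
  qed
  finally have h: "card (cfgs n a b) * (2*b*b + (a+b)*(n-(a+b))) \<le> n^2 * c0" .
  have "card X * (card (cfgs n a b) * (2*b*b + (a+b)*(n-(a+b)))) \<le> card X * (n^2 * c0)"
    using h by simp
  then have "real (card X) * real (card (cfgs n a b)) * real (2*b*b + (a+b)*(n-(a+b))) \<le> real (n^2) * real (card X * c0)"
    by (simp only: of_nat_mult[symmetric] of_nat_le_iff mult.assoc mult.left_commute)
  also have "real (card X * c0) = (\<Sum>L\<in>cfgs n a b. real (Np L))"
    by (simp only: sNp[symmetric] of_nat_sum)
  finally show ?thesis .
qed

end



context pairing
begin

lemma core:
  assumes ba: "b \<le> a" and a0: "0 < a" and eta: "0 < \<eta>" "\<eta> \<le> 1/2"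
    and cX: "\<eta> * real n \<le> real (card X)" and aU: "real a \<le> (1 - \<eta>) * real n" and n0: "0 < n"
  shows "\<eta>^3/384 * real (card (cfgs n a b))
     \<le> real (card {L \<in> cfgs n a b. \<eta>^3/384 * sqrt (real a) \<le> real_of_int (Zc P Q n L)})"
proof -
  define \<rho> where "\<rho> = \<eta>^3/384"
  define \<kappa> where "\<kappa> = \<eta>^3/4"
  define t where "t = \<rho> * sqrt (real a)"
  define N where "N = real (card (cfgs n a b))"
  define M :: real where "M = 2 ^ card X"
  let ?\<Omega> = "cfgs n a b"
  let ?E = "{L \<in> ?\<Omega>. \<kappa> * real a \<le> real (Np L)}"
  let ?Ep = "{L \<in> ?\<Omega>. \<kappa> * real a \<le> real (Np L) \<and> 0 \<le> Cc L}"
  let ?G = "2*b*b + (a+b)*(n-(a+b))"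
  have "0 < \<eta> * real n" using eta n0 by simp
  then have Xne: "X \<noteq> {}" using cX by auto
  have e1: "\<eta> \<le> 1" using eta by simp
  have \<rho>pos: "0 < \<rho>" unfolding \<rho>_def using eta by simp
  have Mpos: "0 < M" unfolding M_def by simp
  have an: "real a \<le> real n"
  proof -
    have "0 \<le> \<eta> * real n" using eta by simp
    then show ?thesis using aU by (simp add: algebra_simps)
  qed
  have G: "\<eta>^2/2 * real a * real n \<le> real ?G"
  proof (cases "\<eta> * real n / 2 \<le> real b")
    case True
    have "\<eta>^2/2 * real a * real n \<le> \<eta>^2/2 * real n * real n"
      using an eta by (intro mult_right_mono mult_left_mono) auto
    also have "\<dots> = 2 * (\<eta> * real n / 2) * (\<eta> * real n / 2)" by (simp add: power2_eq_square)
    also have "\<dots> \<le> 2 * real b * real b" using True eta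
      by (intro mult_mono) auto
    also have "\<dots> \<le> real ?G" by simp
    finally show ?thesis .
  next
    case False
    have aU': "real a \<le> real n - \<eta> * real n" using aU by (simp add: algebra_simps)
    have en: "0 \<le> \<eta> * real n" using eta by simp
    have "real a + real b \<le> real n" using aU' False en by linarith
    then have ab: "a + b \<le> n" by (simp only: of_nat_add[symmetric] of_nat_le_iff)
    have "real (n - (a+b)) = real n - real a - real b" using ab by (simp add: of_nat_diff)
    then have k: "\<eta> * real n / 2 \<le> real (n - (a+b))" using False aU' by linarith
    have ee: "\<eta>*\<eta> \<le> \<eta>*1" using eta e1 by (intro mult_left_mono) auto
    have "\<eta>^2/2 * real a * real n = (\<eta>*\<eta>) * (real a * real n / 2)" by (simp add: power2_eq_square)
    also have "\<dots> \<le> (\<eta>*1) * (real a * real n / 2)" using ee by (intro mult_right_mono) auto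
    also have "\<dots> = real a * (\<eta> * real n / 2)" by simp
    finally have "\<eta>^2/2 * real a * real n \<le> real a * (\<eta> * real n / 2)" .
    also have "\<dots> \<le> real (a+b) * real (n - (a+b))" using k en by (intro mult_mono) auto
    also have "\<dots> \<le> real ?G" by simp
    finally show ?thesis .
  qed
  have sN: "\<eta>^3/2 * real a * N \<le> (\<Sum>L\<in>?\<Omega>. real (Np L))"
  proof -
    have "real (n^2) * (\<eta>^3/2 * real a * N) = (\<eta> * real n) * N * (\<eta>^2/2 * real a * real n)"
      by (simp add: power2_eq_square power3_eq_cube)
    also have "\<dots> \<le> real (card X) * N * real ?G"
      using cX G eta N_def by (intro mult_mono) (auto simp: mult_nonneg_nonneg)
    also have "\<dots> \<le> real (n^2) * (\<Sum>L\<in>?\<Omega>. real (Np L))"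
      using sum_Np[OF ba Xne] unfolding N_def by simp
    finally show ?thesis using n0 by simp
  qed
  have uN: "(\<Sum>L\<in>?\<Omega>. real (Np L)) \<le> 4 * real a * real (card ?E) + \<kappa> * real a * N"
  proof -
    have "(\<Sum>L\<in>?\<Omega>. real (Np L)) = (\<Sum>L\<in>?E. real (Np L)) + (\<Sum>L\<in>?\<Omega> - ?E. real (Np L))"
      using finite_cfgs by (subst sum.subset_diff[of ?E]) auto
    also have "(\<Sum>L\<in>?E. real (Np L)) \<le> (\<Sum>L\<in>?E. 4 * real a)"
    proof (rule sum_mono)
      fix L assume "L \<in> ?E"
      then have "Np L \<le> 2 * (b + (a - b) + b)" using Np_le by auto
      then show "real (Np L) \<le> 4 * real a" using ba by simp
    qed
    also have "(\<Sum>L\<in>?\<Omega> - ?E. real (Np L)) \<le> (\<Sum>L\<in>?\<Omega> - ?E. \<kappa> * real a)"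
      by (intro sum_mono) auto
    also have "(\<Sum>L\<in>?\<Omega> - ?E. \<kappa> * real a) \<le> \<kappa> * real a * N"
    proof -
      have "card (?\<Omega> - ?E) \<le> card ?\<Omega>" using finite_cfgs by (intro card_mono) auto
      then have c: "real (card (?\<Omega> - ?E)) \<le> N" unfolding N_def by simp
      have k0: "0 \<le> \<kappa> * real a" unfolding \<kappa>_def using eta by simp
      have "(\<Sum>L\<in>?\<Omega> - ?E. \<kappa> * real a) = real (card (?\<Omega> - ?E)) * (\<kappa> * real a)" by simp
      also have "\<dots> \<le> N * (\<kappa> * real a)" using c k0 by (rule mult_right_mono)
      finally show ?thesis by (simp add: mult.commute)
    qed
    finally show ?thesis by (simp add: mult.commute)
  qed
  have cE: "\<eta>^3/16 * N \<le> real (card ?E)"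
  proof -
    have "\<eta>^3/2 * real a * N \<le> 4 * real a * real (card ?E) + \<eta>^3/4 * real a * N"
    proof -
      have h1: "\<eta>^3/2 * real a * N \<le> 4 * real a * real (card ?E) + \<kappa> * real a * N" using sN uN by linarith
      have h2: "\<kappa> * real a * N = \<eta>^3/4 * real a * N" by (simp add: \<kappa>_def)
      show ?thesis using h1 unfolding h2 .
    qed
    then have "real a * (\<eta>^3/4 * N) \<le> real a * (4 * real (card ?E))" by (simp add: algebra_simps)
    then have "\<eta>^3/4 * N \<le> 4 * real (card ?E)" using a0 by simp
    then show ?thesis by simp
  qed
  have cEp: "\<eta>^3/32 * N \<le> real (card ?Ep)"
    using cE E_half[OF ba, of "\<kappa> * real a"] by simp
  have per: "M \<le> 12 * real (card {T \<in> Pow X. t \<le> real_of_int (Zc P Q n (act (psi T) L))})" if L: "L \<in> ?Ep" for L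
  proof -
    have u: "0 < 2 * t" unfolding t_def using \<rho>pos a0 by simp
    have "4 * (2*t)^2 = 16 * \<rho>^2 * real a" unfolding t_def using a0 by (simp add: power2_eq_square)
    also have "\<dots> \<le> \<kappa> * real a"
    proof -
      have "\<rho>^2 = \<eta>^6/147456" unfolding \<rho>_def by (simp add: power2_eq_square power_mult_distrib field_simps)
      moreover have "\<eta>^6 \<le> \<eta>^3" using eta e1 by (simp add: power_decreasing)
      moreover have "0 \<le> \<eta>^6" using eta by simp
      ultimately have "16 * \<rho>^2 \<le> \<kappa>" unfolding \<kappa>_def by linarith
      then show ?thesis using a0 by (simp add: mult_right_mono)
    qed
    also have "\<dots> \<le> real (Np L)" using L by simp
    finally have V: "4 * (2*t)^2 \<le> real (Np L)" .
    have "2 ^ card X \<le> 12 * card {T \<in> Pow X. 2 * real_of_int (Zc P Q n (act (psi T) L)) \<ge> 2 * t}"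
      using good_count[of L a b "2*t"] L u V by auto
    then have "real (2 ^ card X) \<le> real (12 * card {T \<in> Pow X. t \<le> real_of_int (Zc P Q n (act (psi T) L))})"
      by (simp only: of_nat_le_iff) simp
    then show ?thesis unfolding M_def by simp
  qed
  have "M * real (card ?Ep) / 12 = (\<Sum>L\<in>?Ep. M / 12)" by simp
  also have "\<dots> \<le> (\<Sum>L\<in>?Ep. real (card {T \<in> Pow X. t \<le> real_of_int (Zc P Q n (act (psi T) L))}))"
    using per by (intro sum_mono) (simp add: divide_le_eq mult.commute)
  also have "\<dots> \<le> (\<Sum>L\<in>?\<Omega>. real (card {T \<in> Pow X. t \<le> real_of_int (Zc P Q n (act (psi T) L))}))"
    using finite_cfgs by (intro sum_mono2) auto
  also have "\<dots> = real (2 ^ card X * card {L \<in> ?\<Omega>. t \<le> real_of_int (Zc P Q n L)})"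
    by (simp only: averaging[where \<Phi> = "\<lambda>L. t \<le> real_of_int (Zc P Q n L)"] of_nat_sum)
  also have "\<dots> = M * real (card {L \<in> ?\<Omega>. t \<le> real_of_int (Zc P Q n L)})" unfolding M_def by simp
  finally have "real (card ?Ep) / 12 \<le> real (card {L \<in> ?\<Omega>. t \<le> real_of_int (Zc P Q n L)})"
    using Mpos by (simp add: mult_le_cancel_left_pos)
  then show ?thesis using cEp unfolding t_def \<rho>_def N_def by simp
qed

end



theorem lemma2p12:
  shows "\<forall>\<eta>::real. \<eta> > 0 \<longrightarrow>
    (\<exists>\<rho>::real. \<rho> > 0 \<and> (\<exists>n0::nat. \<forall>n\<ge>n0. \<forall>P Q :: nat set. \<forall>a b :: nat.
      P \<subseteq> {1..n} \<and> Q \<subseteq> {1..n} \<and> P \<inter> Q = {} \<and>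
      real (card P) / real n \<ge> real (card Q) / real n \<and>
      \<eta> \<le> real (card P) / real n \<and> real (card P) / real n \<le> 1 - \<eta> \<and>
      b \<le> a \<and> real a \<le> (1 - \<eta>) * real n
      \<longrightarrow>
      real (card {(A, B) \<in> disj_pairs n a b. real_of_int (Zstat P Q A B) \<ge> \<rho> * sqrt (real a)})
        \<ge> \<rho> * real (card (disj_pairs n a b))))"
proof (intro allI impI)
  fix \<eta> :: real assume eta: "\<eta> > 0"
  show "\<exists>\<rho>::real. \<rho> > 0 \<and> (\<exists>n0::nat. \<forall>n\<ge>n0. \<forall>P Q :: nat set. \<forall>a b :: nat.
      P \<subseteq> {1..n} \<and> Q \<subseteq> {1..n} \<and> P \<inter> Q = {} \<and>
      real (card P) / real n \<ge> real (card Q) / real n \<and>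
      \<eta> \<le> real (card P) / real n \<and> real (card P) / real n \<le> 1 - \<eta> \<and>
      b \<le> a \<and> real a \<le> (1 - \<eta>) * real n
      \<longrightarrow>
      real (card {(A, B) \<in> disj_pairs n a b. real_of_int (Zstat P Q A B) \<ge> \<rho> * sqrt (real a)})
        \<ge> \<rho> * real (card (disj_pairs n a b)))"
  proof (cases "\<eta> \<le> 1/2")
    case False
    show ?thesis
      by (rule exI[of _ 1], intro conjI exI[of _ "0::nat"] allI impI) (use False in auto)
  next
    case True
    define \<rho> where "\<rho> = \<eta>^3/384"
    have \<rho>pos: "\<rho> > 0" unfolding \<rho>_def using eta by simp
    have \<rho>1: "\<rho> \<le> 1"
    proof -
      have "\<eta>^3 \<le> 1" using eta True by (simp add: power_le_one)
      then show ?thesis unfolding \<rho>_def by simp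
    qed
    show ?thesis
    proof (intro exI[of _ \<rho>] conjI exI[of _ "0::nat"] allI impI \<rho>pos)
      fix n :: nat and P Q :: "nat set" and a b :: nat
      assume H: "P \<subseteq> {1..n} \<and> Q \<subseteq> {1..n} \<and> P \<inter> Q = {} \<and>
        real (card P) / real n \<ge> real (card Q) / real n \<and>
        \<eta> \<le> real (card P) / real n \<and> real (card P) / real n \<le> 1 - \<eta> \<and>
        b \<le> a \<and> real a \<le> (1 - \<eta>) * real n"
      then have PU: "P \<subseteq> {1..n}" and QU: "Q \<subseteq> {1..n}" and PQ: "P \<inter> Q = {}"
        and hq: "real (card Q) / real n \<le> real (card P) / real n"
        and hp1: "\<eta> \<le> real (card P) / real n" and hp2: "real (card P) / real n \<le> 1 - \<eta>"
        and ba: "b \<le> a" and aU: "real a \<le> (1 - \<eta>) * real n" by auto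
      have n0: "0 < n"
      proof (rule ccontr)
        assume "\<not> 0 < n" then have "n = 0" by simp
        then show False using hp1 eta by simp
      qed
      have rn: "0 < real n" using n0 by simp
      have cP1: "\<eta> * real n \<le> real (card P)" using hp1 rn by (simp add: le_divide_eq)
      have cP2: "real (card P) \<le> (1 - \<eta>) * real n" using hp2 rn by (simp add: divide_le_eq)
      have cQP: "card Q \<le> card P" using hq rn by (simp add: divide_le_cancel)
      let ?S = "{(A, B) \<in> disj_pairs n a b. real_of_int (Zstat P Q A B) \<ge> \<rho> * sqrt (real a)}"
      show "real (card ?S) \<ge> \<rho> * real (card (disj_pairs n a b))"
      proof (cases "a = 0")
        case True
        then have b0: "b = 0" using ba by simp
        have "?S = disj_pairs n a b"
        proof safe
          fix A B assume AB: "(A, B) \<in> disj_pairs n a b"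
          then have h: "A \<subseteq> {1..n}" "B \<subseteq> {1..n}" "card A = 0" "card B = 0"
            using True b0 unfolding disj_pairs_def by auto
          have "finite A" "finite B" using finite_subset[OF h(1)] finite_subset[OF h(2)] by auto
          then have "A = {}" "B = {}" using h by auto
          then show "\<rho> * sqrt (real a) \<le> real_of_int (Zstat P Q A B)"
            using True by (simp add: Zstat_def)
        qed
        moreover have "\<rho> * real (card (disj_pairs n a b)) \<le> 1 * real (card (disj_pairs n a b))"
          using \<rho>1 by (intro mult_right_mono) auto
        ultimately show ?thesis by simp
      next
        case False
        then have a0: "0 < a" by simp
        define m where "m = min (card P) (n - card P)"
        have fP: "finite P" using PU by (rule finite_subset) auto
        have cPn: "card P \<le> n" using card_mono[OF _ PU] by simp
        have cUP: "card ({1..n} - P) = n - card P" using PU fP by (simp add: card_Diff_subset)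
        obtain X where XP: "X \<subseteq> P" and cX: "card X = m" and fX: "finite X"
          using obtain_subset_with_card_n[of m P] unfolding m_def by auto
        have QUP: "Q \<subseteq> {1..n} - P" using QU PQ by auto
        have fQ: "finite Q" using QU by (rule finite_subset) auto
        have cQ1: "card Q \<le> n - card P" using card_mono[OF _ QUP] cUP by simp
        have cQm: "card Q \<le> m" unfolding m_def using cQ1 cQP by simp
        have cR: "card ({1..n} - P - Q) = n - card P - card Q"
          using QUP fQ cUP by (simp add: card_Diff_subset)
        obtain Y' where Y'R: "Y' \<subseteq> {1..n} - P - Q" and cY': "card Y' = m - card Q" and fY': "finite Y'"
        proof -
          have "m - card Q \<le> card ({1..n} - P - Q)" using cR unfolding m_def by simp
          then show ?thesis using that obtain_subset_with_card_n by blast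
        qed
        define Y where "Y = Q \<union> Y'"
        have cY: "card Y = m" unfolding Y_def using Y'R fQ fY' cY' cQm
          by (subst card_Un_disjoint) auto
        have fY: "finite Y" unfolding Y_def using fQ fY' by simp
        obtain \<beta> where bij: "bij_betw \<beta> X Y" using finite_same_card_bij[OF fX fY] cX cY by auto
        have pr: "pairing n P Q X \<beta>"
        proof
          show "P \<subseteq> {1..n}" "Q \<subseteq> {1..n}" "P \<inter> Q = {}" "X \<subseteq> P" by (fact PU QU PQ XP)+
          show "\<beta> ` X \<subseteq> {1..n} - P" using bij Y'R QUP unfolding Y_def bij_betw_def by auto
          show "inj_on \<beta> X" using bij unfolding bij_betw_def by simp
          show "Q \<subseteq> \<beta> ` X" using bij unfolding Y_def bij_betw_def by auto
        qed
        have cXr: "\<eta> * real n \<le> real (card X)"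
        proof -
          have "real (n - card P) = real n - real (card P)" using cPn by (simp add: of_nat_diff)
          then have "\<eta> * real n \<le> real (n - card P)" using cP2 by (simp add: algebra_simps)
          then show ?thesis using cP1 unfolding cX m_def by (simp add: min_def)
        qed
        have core: "\<eta>^3/384 * real (card (cfgs n a b))
           \<le> real (card {L \<in> cfgs n a b. \<eta>^3/384 * sqrt (real a) \<le> real_of_int (Zc P Q n L)})"
          by (rule pairing.core[OF pr ba a0 eta True cXr aU n0])
        have e1: "{L \<in> cfgs n a b. \<rho> * sqrt (real a) \<le> real_of_int (Zc P Q n L)}
          = {L \<in> cfgs n a b. (\<lambda>p. \<rho> * sqrt (real a) \<le> real_of_int (Zstat P Q (fst p) (snd p))) (fst L \<union> fst (snd L), snd (snd L))}"
          using Zc_Zstat[OF PQ] by auto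
        have e2: "?S = {p \<in> disj_pairs n a b. \<rho> * sqrt (real a) \<le> real_of_int (Zstat P Q (fst p) (snd p))}"
          by auto
        have e3: "cfgs n a b = {L \<in> cfgs n a b. (\<lambda>p. True) (fst L \<union> fst (snd L), snd (snd L))}" by simp
        have c1: "card {L \<in> cfgs n a b. \<rho> * sqrt (real a) \<le> real_of_int (Zc P Q n L)} = (a choose b) * card ?S"
          unfolding e1 e2 by (rule fiber_count[OF ba])
        have c2: "card (cfgs n a b) = (a choose b) * card (disj_pairs n a b)"
          using fiber_count[OF ba, of n "\<lambda>p. True"] by simp
        have "real (a choose b) * (\<rho> * real (card (disj_pairs n a b))) \<le> real (a choose b) * real (card ?S)"
          using core unfolding \<rho>_def[symmetric] c1 c2 by (simp add: algebra_simps)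
        moreover have "0 < real (a choose b)" using ba by simp
        ultimately show ?thesis by (simp add: mult_le_cancel_left_pos)
      qed
    qed
  qed
qed


end
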